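(* Let $G, H$ and $G_1,\dots,G_n$ be abelian groups with tiles $T \subset G$ and $U_i \subset G_i$, and let $\rho : G \to H$ be a surjective homomorphism that is injective on $T$. If $G_1\times\dots\times G_n\times H$ is $(U_1,\dots,U_n,\rho(T))$-tilable, then $G_1\times\dots\times G_n\times G$ is $(U_1,\dots,U_n,T)$-tilable.
   Context: A tile in an abelian group is a non-empty subset. Given abelian groups $K_1,\dots,K_r$ and tiles $V_j\subset K_j$, let $\mathsf{V}_j \subset K_1\times\dots\times K_r$ be the set of points whose $j$-th coordinate lies in $V_j$ and whose other coordinates are $0$. A copy of $V_j$ is a translate $\mathsf{V}_j + x$ with $x \in K_1\times\dots\times K_r$. A subset of $K_1\times\dots\times K_r$ is $(V_1,\dots,V_r)$-tilable if it is a disjoint union of copies of $V_1,\dots,V_r$. *)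

theory Defs
  imports "HOL-Algebra.Algebra"
begin

text \<open>Points are pairs (x, g)
  with x in the extensional product of the carriers of G_0..G_(n-1) (indices shifted to
  start at 0) and g in carrier L.\<close>

definition prod_carrier ::
  "nat \<Rightarrow> (nat \<Rightarrow> ('a,'m) monoid_scheme) \<Rightarrow> ('b,'n) monoid_scheme \<Rightarrow> ((nat \<Rightarrow> 'a) \<times> 'b) set" where
  "prod_carrier n Gs L = (PiE {..<n} (\<lambda>i. carrier (Gs i))) \<times> carrier L"

definition copies ::
  "nat \<Rightarrow> (nat \<Rightarrow> ('a,'m) monoid_scheme) \<Rightarrow> (nat \<Rightarrow> 'a set) \<Rightarrow> ('b,'n) monoid_scheme \<Rightarrow> 'b set
   \<Rightarrow> ((nat \<Rightarrow> 'a) \<times> 'b) set set" where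
  "copies n Gs U L T =
     {{(x(j := x j \<otimes>\<^bsub>Gs j\<^esub> u), g) | u. u \<in> U j} | j x g.
        j < n \<and> x \<in> PiE {..<n} (\<lambda>i. carrier (Gs i)) \<and> g \<in> carrier L}
   \<union> {{(x, g \<otimes>\<^bsub>L\<^esub> t) | t. t \<in> T} | x g.
        x \<in> PiE {..<n} (\<lambda>i. carrier (Gs i)) \<and> g \<in> carrier L}"

definition tilable ::
  "nat \<Rightarrow> (nat \<Rightarrow> ('a,'m) monoid_scheme) \<Rightarrow> (nat \<Rightarrow> 'a set) \<Rightarrow> ('b,'n) monoid_scheme \<Rightarrow> 'b set
   \<Rightarrow> ((nat \<Rightarrow> 'a) \<times> 'b) set \<Rightarrow> bool" where
  "tilable n Gs U L T S \<longleftrightarrow>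
     (\<exists>C. C \<subseteq> copies n Gs U L T \<and> pairwise disjnt C \<and> \<Union>C = S)"

end

theory Submission
  imports Defs
begin

definition ucp :: "(nat \<Rightarrow> ('a,'m) monoid_scheme) \<Rightarrow> (nat \<Rightarrow> 'a set) \<Rightarrow> nat \<Rightarrow> (nat \<Rightarrow> 'a) \<Rightarrow> 'b \<Rightarrow> ((nat\<Rightarrow>'a)\<times>'b) set" where
  "ucp Gs U j x g = {(x(j := x j \<otimes>\<^bsub>Gs j\<^esub> u), g) | u. u \<in> U j}"

definition tcp :: "('b,'n) monoid_scheme \<Rightarrow> 'b set \<Rightarrow> (nat \<Rightarrow> 'a) \<Rightarrow> 'b \<Rightarrow> ((nat\<Rightarrow>'a)\<times>'b) set" where
  "tcp L T x g = {(x, g \<otimes>\<^bsub>L\<^esub> t) | t. t \<in> T}"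

lemma copies_alt: "copies n Gs U L T =
   {ucp Gs U j x g | j x g. j < n \<and> x \<in> PiE {..<n} (\<lambda>i. carrier (Gs i)) \<and> g \<in> carrier L}
 \<union> {tcp L T x g | x g. x \<in> PiE {..<n} (\<lambda>i. carrier (Gs i)) \<and> g \<in> carrier L}"
  unfolding copies_def ucp_def tcp_def by simp

lemma mem_ucp: "(a,b) \<in> ucp Gs U j x g \<longleftrightarrow> b = g \<and> (\<exists>u\<in>U j. a = x(j := x j \<otimes>\<^bsub>Gs j\<^esub> u))"
  unfolding ucp_def by auto

lemma mem_tcp: "(a,b) \<in> tcp L T x g \<longleftrightarrow> a = x \<and> (\<exists>t\<in>T. b = g \<otimes>\<^bsub>L\<^esub> t)"
  unfolding tcp_def by auto

theorem proposition17:
  fixes n :: nat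
    and Gs :: "nat \<Rightarrow> ('a,'m) monoid_scheme" and U :: "nat \<Rightarrow> 'a set"
    and G :: "('b,'n) monoid_scheme" and T :: "'b set"
    and H :: "('c,'k) monoid_scheme" and \<rho> :: "'b \<Rightarrow> 'c"
  assumes "\<And>i. i < n \<Longrightarrow> comm_group (Gs i)"
    and "\<And>i. i < n \<Longrightarrow> U i \<subseteq> carrier (Gs i) \<and> U i \<noteq> {}"
    and "comm_group G" and "comm_group H"
    and "T \<subseteq> carrier G" and "T \<noteq> {}"
    and "\<rho> \<in> hom G H" and "\<rho> ` carrier G = carrier H"
    and "inj_on \<rho> T"
    and "tilable n Gs U H (\<rho> ` T) (prod_carrier n Gs H)"
  shows "tilable n Gs U G T (prod_carrier n Gs G)"
proof -
  note A = assms
  interpret G: comm_group G by fact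
  interpret H: comm_group H by fact
  interpret gh: group_hom G H \<rho>
    unfolding group_hom_def group_hom_axioms_def using A(7) G.is_group H.is_group by simp
  define PI where "PI = PiE {..<n} (\<lambda>i. carrier (Gs i))"
  have upd: "x(j := x j \<otimes>\<^bsub>Gs j\<^esub> u) \<in> PI" if "x \<in> PI" "j < n" "u \<in> U j" for x j u
  proof -
    interpret Gj: comm_group "Gs j" using A(1) that(2) .
    have "x j \<in> carrier (Gs j)" using that(1,2) unfolding PI_def by auto
    moreover have "u \<in> carrier (Gs j)" using A(2) that by auto
    ultimately have "x j \<otimes>\<^bsub>Gs j\<^esub> u \<in> carrier (Gs j)" by simp
    then have "x(j := x j \<otimes>\<^bsub>Gs j\<^esub> u) \<in> PiE (insert j {..<n}) (\<lambda>i. carrier (Gs i))"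
      using PiE_fun_upd that(1) unfolding PI_def by metis
    then show ?thesis using that(2) unfolding PI_def by (simp add: insert_absorb)
  qed
  from A(10) obtain C where C: "C \<subseteq> copies n Gs U H (\<rho>`T)" "pairwise disjnt C"
      "\<Union>C = prod_carrier n Gs H" unfolding tilable_def by blast
  define isT where "isT E \<longleftrightarrow> (\<exists>x h. x \<in> PI \<and> h \<in> carrier H \<and> E = tcp H (\<rho>`T) x h)" for E
  define xh where "xh E = (SOME p. fst p \<in> PI \<and> snd p \<in> carrier H \<and> E = tcp H (\<rho>`T) (fst p) (snd p))" for E
  have xh: "fst (xh E) \<in> PI \<and> snd (xh E) \<in> carrier H \<and> E = tcp H (\<rho>`T) (fst (xh E)) (snd (xh E))"
    if "isT E" for E
  proof -
    from that obtain x h where "x \<in> PI \<and> h \<in> carrier H \<and> E = tcp H (\<rho>`T) x h"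
      unfolding isT_def by blast
    then have "\<exists>p. fst p \<in> PI \<and> snd p \<in> carrier H \<and> E = tcp H (\<rho>`T) (fst p) (snd p)"
      by (intro exI[of _ "(x,h)"]) simp
    from someI_ex[OF this] show ?thesis unfolding xh_def .
  qed
  define lifts where "lifts E = (if isT E then {tcp G T (fst (xh E)) g | g. g \<in> carrier G \<and> \<rho> g = snd (xh E)}
     else {ucp Gs U j x g | j x g. j < n \<and> x \<in> PI \<and> g \<in> carrier G \<and> ucp Gs U j x (\<rho> g) = E})" for E
  define C' where "C' = (\<Union>E\<in>C. lifts E)"
  have map: "map_prod id \<rho> p \<in> E" if LP: "D \<in> lifts E" "p \<in> D" for D E p
  proof (cases "isT E")
    case True
    then obtain g where g: "g \<in> carrier G" "\<rho> g = snd (xh E)" "D = tcp G T (fst (xh E)) g"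
      using LP(1) True unfolding lifts_def by auto
    then obtain t where t: "t \<in> T" "p = (fst (xh E), g \<otimes>\<^bsub>G\<^esub> t)" using LP(2) unfolding tcp_def by auto
    have "\<rho> (g \<otimes>\<^bsub>G\<^esub> t) = snd (xh E) \<otimes>\<^bsub>H\<^esub> \<rho> t" using g t A(5) by auto
    then have "map_prod id \<rho> p \<in> tcp H (\<rho>`T) (fst (xh E)) (snd (xh E))"
      using t unfolding tcp_def by auto
    then show ?thesis using xh[OF True] by simp
  next
    case False
    then obtain j x g where "D = ucp Gs U j x g" "ucp Gs U j x (\<rho> g) = E"
      using LP(1) False unfolding lifts_def by auto
    then show ?thesis using LP(2) unfolding ucp_def by auto
  qed
  show ?thesis unfolding tilable_def
  proof (intro exI[of _ C'] conjI)
    show "C' \<subseteq> copies n Gs U G T"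
    proof
      fix D assume "D \<in> C'"
      then obtain E where E: "E \<in> C" "D \<in> lifts E" unfolding C'_def by auto
      show "D \<in> copies n Gs U G T"
      proof (cases "isT E")
        case True
        then obtain g where "g \<in> carrier G" "D = tcp G T (fst (xh E)) g"
          using E unfolding lifts_def by auto
        then show ?thesis using xh[OF True] unfolding copies_alt PI_def by blast
      next
        case False
        then obtain j x g where "j < n" "x \<in> PI" "g \<in> carrier G" "D = ucp Gs U j x g"
          using E unfolding lifts_def by auto
        then show ?thesis unfolding copies_alt PI_def by blast
      qed
    qed
    show "pairwise disjnt C'"
    proof (rule pairwiseI)
      fix D1 D2 assume D: "D1 \<in> C'" "D2 \<in> C'" "D1 \<noteq> D2"
      then obtain E1 E2 where E: "E1 \<in> C" "D1 \<in> lifts E1" "E2 \<in> C" "D2 \<in> lifts E2"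
        unfolding C'_def by auto
      show "disjnt D1 D2"
      proof (rule ccontr)
        assume "\<not> disjnt D1 D2"
        then obtain p where p: "p \<in> D1" "p \<in> D2" unfolding disjnt_def by auto
        have "E1 = E2"
          using map[OF E(2) p(1)] map[OF E(4) p(2)] C(2) E(1,3) unfolding pairwise_def disjnt_def by blast
        then have E2: "D2 \<in> lifts E1" using E(4) by simp
        have "D1 = D2"
        proof (cases "isT E1")
          case True
          then obtain g1 g2 where g: "g1 \<in> carrier G" "\<rho> g1 = snd (xh E1)" "D1 = tcp G T (fst (xh E1)) g1"
            "g2 \<in> carrier G" "\<rho> g2 = snd (xh E1)" "D2 = tcp G T (fst (xh E1)) g2"
            using E(2) E2 True unfolding lifts_def by auto
          then obtain t1 t2 where t: "t1 \<in> T" "t2 \<in> T" "g1 \<otimes>\<^bsub>G\<^esub> t1 = g2 \<otimes>\<^bsub>G\<^esub> t2"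
            using p unfolding tcp_def by auto
          have tc: "t1 \<in> carrier G" "t2 \<in> carrier G" using t A(5) by auto
          have "\<rho> g1 \<otimes>\<^bsub>H\<^esub> \<rho> t1 = \<rho> g1 \<otimes>\<^bsub>H\<^esub> \<rho> t2"
            using arg_cong[OF t(3), of \<rho>] g tc by simp
          then have "\<rho> t1 = \<rho> t2" using g(1) tc by (simp add: H.l_cancel)
          then have "t1 = t2" using A(9) t inj_on_def by metis
          then have "g1 = g2" using t(3) g tc G.r_cancel by metis
          then show ?thesis using g by simp
        next
          case False
          then obtain j1 x1 g1 j2 x2 g2 where g: "D1 = ucp Gs U j1 x1 g1" "ucp Gs U j1 x1 (\<rho> g1) = E1"
            "D2 = ucp Gs U j2 x2 g2" "ucp Gs U j2 x2 (\<rho> g2) = E1"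
            using E(2) E2 False unfolding lifts_def by auto
          then have gg: "g1 = g2" using p by (cases p) (auto simp: mem_ucp)
          show "D1 = D2"
          proof (intro Set.set_eqI)
            fix q :: "(nat \<Rightarrow> 'a) \<times> 'b"
            obtain a b where q: "q = (a,b)" by (cases q)
            have h1: "(a,b) \<in> D1 \<longleftrightarrow> b = g1 \<and> (a, \<rho> g1) \<in> E1"
              unfolding g(1) g(2)[symmetric] mem_ucp by simp
            have h2: "(a,b) \<in> D2 \<longleftrightarrow> b = g2 \<and> (a, \<rho> g2) \<in> E1"
              unfolding g(3) g(4)[symmetric] mem_ucp by simp
            show "q \<in> D1 \<longleftrightarrow> q \<in> D2" using h1 h2 gg q by simp
          qed
        qed
        with D(3) show False by simp
      qed
    qed
    show "\<Union>C' = prod_carrier n Gs G"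
    proof
      show "\<Union>C' \<subseteq> prod_carrier n Gs G"
      proof
        fix p assume "p \<in> \<Union>C'"
        then obtain E D where E: "E \<in> C" "D \<in> lifts E" "p \<in> D" unfolding C'_def by auto
        show "p \<in> prod_carrier n Gs G"
        proof (cases "isT E")
          case True
          then obtain g where g: "g \<in> carrier G" "D = tcp G T (fst (xh E)) g"
            using E True unfolding lifts_def by auto
          then obtain t where t: "t \<in> T" "p = (fst (xh E), g \<otimes>\<^bsub>G\<^esub> t)" using E(3) unfolding tcp_def by auto
          then show ?thesis using xh[OF True] g A(5) unfolding prod_carrier_def PI_def by auto
        next
          case False
          then obtain j x g where g: "j < n" "x \<in> PI" "g \<in> carrier G" "D = ucp Gs U j x g"
            using E False unfolding lifts_def by auto
          then obtain u where "u \<in> U j" "p = (x(j := x j \<otimes>\<^bsub>Gs j\<^esub> u), g)" using E(3) unfolding ucp_def by auto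
          then show ?thesis using upd g unfolding prod_carrier_def PI_def by auto
        qed
      qed
      show "prod_carrier n Gs G \<subseteq> \<Union>C'"
      proof
        fix p assume pc: "p \<in> prod_carrier n Gs G"
        obtain y g where p: "p = (y,g)" by (cases p)
        have yg: "y \<in> PI" "g \<in> carrier G" using pc p unfolding prod_carrier_def PI_def by auto
        have "(y, \<rho> g) \<in> prod_carrier n Gs H" using yg unfolding prod_carrier_def PI_def by auto
        then obtain E where E: "E \<in> C" "(y, \<rho> g) \<in> E" using C(3) by auto
        have "\<exists>D \<in> lifts E. p \<in> D"
        proof (cases "isT E")
          case True
          note X = xh[OF True]
          have "(y, \<rho> g) \<in> tcp H (\<rho>`T) (fst (xh E)) (snd (xh E))" using E(2) X by metis
          then obtain t where t: "t \<in> T" "y = fst (xh E)" "\<rho> g = snd (xh E) \<otimes>\<^bsub>H\<^esub> \<rho> t"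
            by (auto simp: mem_tcp)
          have tc: "t \<in> carrier G" using t A(5) by auto
          define g' where "g' = g \<otimes>\<^bsub>G\<^esub> inv\<^bsub>G\<^esub> t"
          have g'c: "g' \<in> carrier G" using tc yg unfolding g'_def by simp
          have "\<rho> g' = \<rho> g \<otimes>\<^bsub>H\<^esub> inv\<^bsub>H\<^esub> \<rho> t" using tc yg unfolding g'_def by simp
          also have "\<dots> = snd (xh E)" using t X tc by (simp add: H.m_assoc)
          finally have r: "\<rho> g' = snd (xh E)" .
          have "g' \<otimes>\<^bsub>G\<^esub> t = g" using tc yg unfolding g'_def by (simp add: G.m_assoc)
          then have "p \<in> tcp G T (fst (xh E)) g'" using p t by (auto simp: mem_tcp)
          moreover have "tcp G T (fst (xh E)) g' \<in> lifts E" using True g'c r unfolding lifts_def by auto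
          ultimately show ?thesis by blast
        next
          case False
          have "E \<in> copies n Gs U H (\<rho>`T)" using C(1) E(1) by auto
          then obtain j x h where jx: "j < n" "x \<in> PI" "h \<in> carrier H" "E = ucp Gs U j x h"
            using False unfolding copies_alt isT_def PI_def by blast
          then have "h = \<rho> g" using E(2) by (simp add: mem_ucp)
          then have "ucp Gs U j x g \<in> lifts E" using False jx yg unfolding lifts_def by auto
          moreover have "p \<in> ucp Gs U j x g" using E(2) jx p \<open>h = \<rho> g\<close> by (simp add: mem_ucp)
          ultimately show ?thesis by blast
        qed
        then show "p \<in> \<Union>C'" using E(1) unfolding C'_def by blast
      qed
    qed
  qed
qed

end
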